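(* Let $S_o\subseteq\mathbb U_d\times\mathcal P_\Pi$ and $S_f\subseteq\mathbb U_d\times\mathcal R_\Pi$. The program $\min\ c_1x+\eta$ subject to $x\in\mathcal X$; for every $(u_d,\pi)\in S_o$: $\eta\ge c_2y^{(u_d,\pi)}-\dot u(\tilde u^{(u_d,\pi)})$, $y^{(u_d,\pi)}\ge 0$, $B_2y^{(u_d,\pi)}+E_cu_c^{(u_d,\pi)}+\dot u(\tilde u^{(u_d,\pi)})\ge d-B_1x-E_du_d$, $(u_c^{(u_d,\pi)},\tilde u^{(u_d,\pi)},\lambda^{(u_d,\pi)})\in\mathcal{OU}(x,u_d,\pi)$; for every $(u_d,\gamma)\in S_f$: $B_2y^{(u_d,\gamma)}+E_cv_c^{(u_d,\gamma)}+\dot u(\tilde v^{(u_d,\gamma)})\ge d-B_1x-E_du_d$, $y^{(u_d,\gamma)}\ge 0$, $(v_c^{(u_d,\gamma)},\tilde v^{(u_d,\gamma)},\zeta^{(u_d,\gamma)})\in\mathcal{OU}(x,u_d,\gamma)$, is a relaxation of the two-stage robust optimization problem, and its optimal value is at most $w^*$.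
   Context: $\mathcal X=\{x\in\mathbb R^{n_x}_+\times\mathbb Z^{m_x}_+: Ax\ge b\}$. $\mathcal U(x)=\{u=(u_c,u_d)\in\mathbb R^{n_u}_+\times\mathbb U_d: F_c(x)u_c+F_d(x)u_d\le h+Gx\}$ with $\mathbb U_d\subseteq\mathbb Z^{m_u}_+$ finite. Two-stage robust problem: $w^*=\min_{x\in\mathcal X}\big[c_1x+\max_{u\in\mathcal U(x)}\min\{c_2y: B_2y\ge d-B_1x-E_cu_c-E_du_d,\ y\ge0\}\big]$ (minimum over an empty set $=+\infty$). $\Pi=\{\pi\ge0: B_2^\intercal\pi\le c_2^\intercal\}$, $\mathcal P_\Pi$ its extreme points, $\mathcal R_\Pi$ its extreme rays. Standing assumptions: $\mathcal U(x)\ne\emptyset$ and bounded for $x\in\mathcal X$; $\min\{c_1x+c_2y: x\in\mathcal X,u\in\mathcal U(x),B_2y\ge d-B_1x-E_cu_c-E_du_d,y\ge0\}>-\infty$. $M$ is a sufficiently large constant, $\mathbf 1$ the all-ones vector, $\circ$ the componentwise product. $\mathcal{OU}(x,u_d,\beta)$ is the set of $(u_c,\tilde u,\lambda)$ with $F_c(x)u_c-\tilde u\le h+Gx-F_d(x)u_d$, $F_c(x)^\intercal\lambda\ge-E_c^\intercal\beta$, $\lambda\le M\mathbf 1$, $\lambda\circ(h+Gx-F_d(x)u_d-F_c(x)u_c+\tilde u)=0$, $u_c\circ(F_c(x)^\intercal\lambda+E_c^\intercal\beta)=0$, $\tilde u\circ(M\mathbf 1-\lambda)=0$, $u_c,\tilde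 u,\lambda\ge0$. The indicator $\dot u(\tilde u)$ is $0$ if $\tilde u=0$ and $+\infty$ otherwise; $+\infty$ added to a vector is added to every component, and constraints with an infinite slack are automatically satisfied. *)

theory Defs
  imports "HOL-Analysis.Analysis"
begin

definition udot :: "real^'n \<Rightarrow> ereal" where
  "udot v = (if v = 0 then 0 else \<infinity>)"

definition Xset :: "real^'x^'a \<Rightarrow> real^'a \<Rightarrow> 'x set \<Rightarrow> (real^'x) set" where
  "Xset A b Iint = {x. 0 \<le> x \<and> (\<forall>i\<in>Iint. x$i \<in> \<int>) \<and> b \<le> A *v x}"

definition Uset :: "(real^'x \<Rightarrow> real^'uc^'r) \<Rightarrow> (real^'x \<Rightarrow> real^'ud^'r) \<Rightarrow> real^'r
    \<Rightarrow> real^'x^'r \<Rightarrow> (real^'ud) set \<Rightarrow> real^'x \<Rightarrow> ((real^'uc) \<times> (real^'ud)) set" where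
  "Uset Fc Fd h G Ud x = {(uc, ud). 0 \<le> uc \<and> ud \<in> Ud \<and> Fc x *v uc + Fd x *v ud \<le> h + G *v x}"

definition second_stage :: "real^'y^'m \<Rightarrow> real^'y \<Rightarrow> real^'m \<Rightarrow> real^'x^'m \<Rightarrow> real^'uc^'m
    \<Rightarrow> real^'ud^'m \<Rightarrow> real^'x \<Rightarrow> real^'uc \<Rightarrow> real^'ud \<Rightarrow> ereal" where
  "second_stage B2 c2 d B1 Ec Ed x uc ud =
     (INF y \<in> {y. 0 \<le> y \<and> d - B1 *v x - Ec *v uc - Ed *v ud \<le> B2 *v y}. ereal (c2 \<bullet> y))"

definition recourse :: "(real^'x \<Rightarrow> real^'uc^'r) \<Rightarrow> (real^'x \<Rightarrow> real^'ud^'r) \<Rightarrow> real^'r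
    \<Rightarrow> real^'x^'r \<Rightarrow> (real^'ud) set \<Rightarrow> real^'y^'m \<Rightarrow> real^'y \<Rightarrow> real^'m \<Rightarrow> real^'x^'m
    \<Rightarrow> real^'uc^'m \<Rightarrow> real^'ud^'m \<Rightarrow> real^'x \<Rightarrow> ereal" where
  "recourse Fc Fd h G Ud B2 c2 d B1 Ec Ed x =
     (SUP u \<in> Uset Fc Fd h G Ud x. second_stage B2 c2 d B1 Ec Ed x (fst u) (snd u))"

definition w_star :: "real^'x^'a \<Rightarrow> real^'a \<Rightarrow> 'x set \<Rightarrow> real^'x
    \<Rightarrow> (real^'x \<Rightarrow> real^'uc^'r) \<Rightarrow> (real^'x \<Rightarrow> real^'ud^'r) \<Rightarrow> real^'r
    \<Rightarrow> real^'x^'r \<Rightarrow> (real^'ud) set \<Rightarrow> real^'y^'m \<Rightarrow> real^'y \<Rightarrow> real^'m \<Rightarrow> real^'x^'m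
    \<Rightarrow> real^'uc^'m \<Rightarrow> real^'ud^'m \<Rightarrow> ereal" where
  "w_star A b Iint c1 Fc Fd h G Ud B2 c2 d B1 Ec Ed =
     (INF x \<in> Xset A b Iint. ereal (c1 \<bullet> x) + recourse Fc Fd h G Ud B2 c2 d B1 Ec Ed x)"

definition PiSet :: "real^'y^'m \<Rightarrow> real^'y \<Rightarrow> (real^'m) set" where
  "PiSet B2 c2 = {p. 0 \<le> p \<and> transpose B2 *v p \<le> c2}"

definition rec_cone :: "('a::real_vector) set \<Rightarrow> 'a set" where
  "rec_cone S = {g. \<forall>p\<in>S. \<forall>t::real. 0 \<le> t \<longrightarrow> p + t *\<^sub>R g \<in> S}"

definition extreme_rays :: "('a::real_vector) set \<Rightarrow> 'a set" where
  "extreme_rays S = {g. g \<noteq> 0 \<and> g \<in> rec_cone S \<and>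
      {t *\<^sub>R g | t::real. 0 \<le> t} face_of rec_cone S}"

definition OU :: "(real^'x \<Rightarrow> real^'uc^'r) \<Rightarrow> (real^'x \<Rightarrow> real^'ud^'r) \<Rightarrow> real^'r
    \<Rightarrow> real^'x^'r \<Rightarrow> real^'uc^'m \<Rightarrow> real \<Rightarrow> real^'x \<Rightarrow> real^'ud \<Rightarrow> real^'m
    \<Rightarrow> ((real^'uc) \<times> (real^'r) \<times> (real^'r)) set" where
  "OU Fc Fd h G Ec M x ud \<beta> = {(uc, ut, lam).
      Fc x *v uc - ut \<le> h + G *v x - Fd x *v ud \<and>
      - (transpose Ec *v \<beta>) \<le> transpose (Fc x) *v lam \<and>
      lam \<le> (\<chi> i. M) \<and>
      (\<forall>i. lam $ i * (h + G *v x - Fd x *v ud - Fc x *v uc + ut) $ i = 0) \<and>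
      (\<forall>j. uc $ j * (transpose (Fc x) *v lam + transpose Ec *v \<beta>) $ j = 0) \<and>
      (\<forall>i. ut $ i * (M - lam $ i) = 0) \<and>
      0 \<le> uc \<and> 0 \<le> ut \<and> 0 \<le> lam}"

text \<open>Feasibility in the relaxed program for the scenario sets So, Sf. The scenario
variables are functions of the index (u_d, pi) resp. (u_d, gamma).\<close>
definition relax_feas where
  "relax_feas A b Iint Fc Fd h G B2 c2 d B1 Ec Ed M So Sf x \<eta> yo uco uto lo yf vc vt z \<longleftrightarrow>
     x \<in> Xset A b Iint \<and>
     (\<forall>ud p. (ud, p) \<in> So \<longrightarrow>
        ereal (c2 \<bullet> yo (ud, p)) - udot (uto (ud, p)) \<le> ereal \<eta> \<and>
        0 \<le> yo (ud, p) \<and>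
        (\<forall>i. ereal ((d - B1 *v x - Ed *v ud) $ i)
              \<le> ereal ((B2 *v yo (ud, p) + Ec *v uco (ud, p)) $ i) + udot (uto (ud, p))) \<and>
        (uco (ud, p), uto (ud, p), lo (ud, p)) \<in> OU Fc Fd h G Ec M x ud p) \<and>
     (\<forall>ud g. (ud, g) \<in> Sf \<longrightarrow>
        (\<forall>i. ereal ((d - B1 *v x - Ed *v ud) $ i)
              \<le> ereal ((B2 *v yf (ud, g) + Ec *v vc (ud, g)) $ i) + udot (vt (ud, g))) \<and>
        0 \<le> yf (ud, g) \<and>
        (vc (ud, g), vt (ud, g), z (ud, g)) \<in> OU Fc Fd h G Ec M x ud g)"

definition relax_value where
  "relax_value A b Iint c1 Fc Fd h G B2 c2 d B1 Ec Ed M So Sf =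
     Inf {ereal (c1 \<bullet> x + \<eta>) | x \<eta> yo uco uto lo yf vc vt z.
            relax_feas A b Iint Fc Fd h G B2 c2 d B1 Ec Ed M So Sf x \<eta> yo uco uto lo yf vc vt z}"

end

theory Submission
  imports Defs
begin


definition nn :: "'a::euclidean_space \<Rightarrow> bool" where
  "nn x \<longleftrightarrow> (\<forall>i\<in>Basis. 0 \<le> x \<bullet> i)"

lemma convex_cone_sum:
  assumes "convex_cone S" "\<And>i. i \<in> I \<Longrightarrow> f i \<in> S"
  shows "sum f I \<in> S"
  using assms(2)
proof (induction I rule: infinite_finite_induct)
  case (infinite A) then show ?case using convex_cone_contains_0[OF assms(1)] by simp
next
  case empty then show ?case using convex_cone_contains_0[OF assms(1)] by simp
next
  case (insert x F) then show ?case by (simp add: convex_cone_add[OF assms(1)])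
qed

lemma nn_cone: "convex_cone {x::'a::euclidean_space. nn x}"
  unfolding convex_cone_iff nn_def by (auto simp: inner_add_left)

lemma closed_nn_image:
  fixes L :: "'a::euclidean_space \<Rightarrow> 'b::euclidean_space"
  assumes lin: "linear L"
  shows "closed (L ` {x. nn x})"
proof -
  have "L ` {x. nn x} = convex_cone hull (L ` Basis)"
  proof
    show "L ` {x. nn x} \<subseteq> convex_cone hull (L ` Basis)"
    proof
      fix z assume "z \<in> L ` {x. nn x}"
      then obtain x where x: "nn x" "z = L x" by auto
      have "z = L (\<Sum>b\<in>Basis. (x \<bullet> b) *\<^sub>R b)" using x by (simp add: euclidean_representation)
      also have "\<dots> = (\<Sum>b\<in>Basis. (x \<bullet> b) *\<^sub>R L b)"
        by (simp add: linear_sum[OF lin] linear_scale[OF lin])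
      also have "\<dots> \<in> convex_cone hull (L ` Basis)"
        apply (rule convex_cone_sum[OF convex_cone_convex_cone_hull])
        apply (rule convex_cone_scaleR[OF convex_cone_convex_cone_hull])
        using x(1) by (auto simp: nn_def intro: hull_inc)
      finally show "z \<in> convex_cone hull (L ` Basis)" .
    qed
    show "convex_cone hull (L ` Basis) \<subseteq> L ` {x. nn x}"
      apply (rule hull_minimal)
      using nn_cone lin convex_cone_linear_image
      by (auto simp: nn_def inner_Basis)
  qed
  then show ?thesis by (simp add: closed_convex_cone_hull)
qed

lemma farkas:
  fixes L :: "'a::euclidean_space \<Rightarrow> 'b::euclidean_space"
  assumes lin: "linear L"
  shows "(\<exists>x. nn x \<and> L x = b) \<or> (\<exists>y. y \<bullet> b < 0 \<and> (\<forall>x. nn x \<longrightarrow> 0 \<le> y \<bullet> L x))"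
proof (cases "b \<in> L ` {x. nn x}")
  case True then show ?thesis by auto
next
  case False
  have cc: "convex_cone (L ` {x. nn x})"
    using nn_cone lin convex_cone_linear_image by blast
  then have "convex (L ` {x. nn x})" by (simp add: convex_cone_def)
  from separating_hyperplane_closed_point[OF this closed_nn_image[OF lin] False]
  obtain a c where ac: "a \<bullet> b < c" "\<forall>z\<in>L ` {x. nn x}. c < a \<bullet> z" by blast
  have "c < 0" using ac(2) convex_cone_contains_0[OF cc] by force
  have "0 \<le> a \<bullet> L x" if "nn x" for x
  proof (rule ccontr)
    assume neg: "\<not> 0 \<le> a \<bullet> L x"
    define t where "t = c / (a \<bullet> L x)"
    have "t \<ge> 0" using neg \<open>c < 0\<close> by (simp add: t_def divide_nonpos_neg)
    have "L (t *\<^sub>R x) \<in> L ` {x. nn x}" using that \<open>t \<ge> 0\<close> by (auto simp: nn_def)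
    then have "c < a \<bullet> L (t *\<^sub>R x)" using ac(2) by blast
    also have "\<dots> = t * (a \<bullet> L x)" by (simp add: linear_scale[OF lin])
    also have "\<dots> = c" using neg by (simp add: t_def)
    finally show False by simp
  qed
  then show ?thesis using ac(1) \<open>c < 0\<close> by force
qed

lemma nn_prod[simp]: "nn (a, b) \<longleftrightarrow> nn a \<and> nn b"
proof -
  have "(\<forall>i\<in>Basis. 0 \<le> (a, b) \<bullet> i) \<longleftrightarrow> (\<forall>i\<in>Basis. 0 \<le> a \<bullet> i) \<and> (\<forall>i\<in>Basis. 0 \<le> b \<bullet> i)"
    unfolding Basis_prod_def by (simp add: ball_Un)
  then show ?thesis unfolding nn_def .
qed

lemma nn_vec[simp]: "nn (x::real^'n) \<longleftrightarrow> 0 \<le> x"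
  unfolding nn_def less_eq_vec_def by (auto simp: Basis_vec_def inner_axis)

lemma nn_real[simp]: "nn (x::real) \<longleftrightarrow> 0 \<le> x"
  unfolding nn_def by simp

lemma inner_nonneg_vec: "0 \<le> (x::real^'n) \<Longrightarrow> 0 \<le> y \<Longrightarrow> 0 \<le> x \<bullet> y"
  unfolding inner_vec_def less_eq_vec_def by (auto intro!: sum_nonneg)

lemma inner_mono_vec: "0 \<le> (z::real^'n) \<Longrightarrow> x \<le> y \<Longrightarrow> z \<bullet> x \<le> z \<bullet> y"
  using inner_nonneg_vec[of z "y - x"] by (simp add: inner_diff_right)

lemma inner_zero_comp: "0 \<le> (x::real^'n) \<Longrightarrow> 0 \<le> y \<Longrightarrow> x \<bullet> y = 0 \<Longrightarrow> x $ i * y $ i = 0"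
  unfolding inner_vec_def less_eq_vec_def
  by (subst (asm) sum_nonneg_eq_0_iff) auto

lemma inner_transpose: "(u::real^'c) \<bullet> (transpose F *v w) = w \<bullet> (F *v u)"
  by (metis dot_lmul_matrix inner_commute transpose_matrix_vector)

lemma inner_vm: "(u::real^'c) \<bullet> (w v* F) = w \<bullet> (F *v u)"
  by (metis dot_lmul_matrix inner_commute)

lemma nonneg_from_inner: "(\<And>e::real^'n. 0 \<le> e \<Longrightarrow> 0 \<le> a \<bullet> e) \<Longrightarrow> 0 \<le> a"
  unfolding less_eq_vec_def
proof
  fix i assume h: "\<And>e::real^'n. (\<forall>i. 0 $ i \<le> e $ i) \<Longrightarrow> 0 \<le> a \<bullet> e"
  have "0 \<le> a \<bullet> axis i 1" by (rule h) (simp add: axis_def)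
  then show "0 $ i \<le> a $ i" by (simp add: inner_axis)
qed

lemma vm_scaleR: "(c *\<^sub>R (a::real^'r)) v* (F::real^'c^'r) = c *\<^sub>R (a v* F)"
  by (metis transpose_matrix_vector matrix_vector_mult_scaleR)

lemma kkt_exists:
  fixes F :: "real^'c^'r" and g :: "real^'c" and s :: "real^'r" and M :: real
  assumes l0: "0 \<le> lam0" "lam0 \<le> (\<chi> i. M)" "- g \<le> transpose F *v lam0"
  shows "\<exists>uc ut lam. F *v uc - ut \<le> s \<and> - g \<le> transpose F *v lam \<and> lam \<le> (\<chi> i. M) \<and>
     (\<forall>i. lam $ i * (s - F *v uc + ut) $ i = 0) \<and>
     (\<forall>j. uc $ j * (transpose F *v lam + g) $ j = 0) \<and>
     (\<forall>i. ut $ i * (M - lam $ i) = 0) \<and> 0 \<le> uc \<and> 0 \<le> ut \<and> 0 \<le> lam"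
proof -
  define Mv :: "real^'r" where "Mv = (\<chi> i. M)"
  define L :: "(real^'c) \<times> (real^'r) \<times> (real^'r) \<times> (real^'r) \<times> (real^'c) \<times> (real^'r) \<times> real
      \<Rightarrow> (real^'r) \<times> (real^'c) \<times> (real^'r) \<times> real" where
    "L = (\<lambda>(uc, ut, lam, s1, s2, s3, s4). (F *v uc - ut + s1, - (transpose F *v lam) + s2, lam + s3,
           g \<bullet> uc + Mv \<bullet> ut + s \<bullet> lam + s4))"
  have lin: "linear L"
    unfolding linear_iff L_def
    by (auto simp: algebra_simps inner_add_right inner_scaleR_right vm_scaleR)
  from farkas[OF lin, of "(s, g, Mv, 0)"]
  show ?thesis
  proof
    assume "\<exists>x. nn x \<and> L x = (s, g, Mv, 0)"
    then obtain uc ut lam s1 s2 s3 s4 where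
      nnx: "0 \<le> uc" "0 \<le> ut" "0 \<le> lam" "0 \<le> s1" "0 \<le> s2" "0 \<le> s3" "0 \<le> s4" and
      eq: "F *v uc - ut + s1 = s" "- (transpose F *v lam) + s2 = g" "lam + s3 = Mv"
          "g \<bullet> uc + Mv \<bullet> ut + s \<bullet> lam + s4 = 0"
      by (auto simp: L_def)
    have e1: "s1 = s - F *v uc + ut" using eq(1) by (auto simp: algebra_simps)
    have e2: "s2 = transpose F *v lam + g" using eq(2) by (auto simp: algebra_simps)
    have e3: "s3 = Mv - lam" using eq(3) by (auto simp: algebra_simps)
    have sumid: "uc \<bullet> s2 + ut \<bullet> s3 + lam \<bullet> s1 = g \<bullet> uc + Mv \<bullet> ut + s \<bullet> lam"
      unfolding e1 e2 e3
      by (simp add: inner_add_right inner_diff_right inner_transpose inner_vm inner_commute)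
    have p1: "0 \<le> uc \<bullet> s2" "0 \<le> ut \<bullet> s3" "0 \<le> lam \<bullet> s1"
      using nnx by (auto intro: inner_nonneg_vec)
    have z: "uc \<bullet> s2 = 0" "ut \<bullet> s3 = 0" "lam \<bullet> s1 = 0"
      using p1 sumid eq(4) nnx(7) by linarith+
    show ?thesis
    proof (intro exI conjI)
      show "F *v uc - ut \<le> s" using nnx(4) eq(1) unfolding less_eq_vec_def
        by (auto simp: vector_add_component)
      show "- g \<le> transpose F *v lam" using nnx(5) e2 unfolding less_eq_vec_def by (auto simp: add.commute add_nonneg_eq_0_iff) (smt (verit))
      show "lam \<le> (\<chi> i. M)" using nnx(6) e3 unfolding less_eq_vec_def Mv_def by auto
      show "\<forall>i. lam $ i * (s - F *v uc + ut) $ i = 0"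
        using inner_zero_comp[OF nnx(3) nnx(4) z(3)] e1 by simp
      show "\<forall>i. uc $ i * (transpose F *v lam + g) $ i = 0"
        using inner_zero_comp[OF nnx(1) nnx(5) z(1)] e2 by simp
      show "\<forall>i. ut $ i * (M - lam $ i) = 0"
        using inner_zero_comp[OF nnx(2) nnx(6) z(2)] e3 by (simp add: Mv_def)
    qed (use nnx in auto)
  next
    assume "\<exists>y. y \<bullet> (s, g, Mv, 0) < 0 \<and> (\<forall>x. nn x \<longrightarrow> 0 \<le> y \<bullet> L x)"
    then obtain a bb c t where Q: "a \<bullet> s + bb \<bullet> g + c \<bullet> Mv < 0"
      and cert: "\<And>x. nn x \<Longrightarrow> 0 \<le> (a, bb, c, t) \<bullet> L x"
    proof -
      from \<open>\<exists>y. _\<close> obtain y where y: "y \<bullet> (s, g, Mv, 0) < 0" "\<forall>x. nn x \<longrightarrow> 0 \<le> y \<bullet> L x" by blast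
      obtain a bb c t where "y = (a, bb, c, t)" by (cases y) auto
      note yy = y[unfolded \<open>y = (a, bb, c, t)\<close>]
      show thesis
      proof (rule that[of a bb c t])
        show "a \<bullet> s + bb \<bullet> g + c \<bullet> Mv < 0" using yy(1) by (simp add: add.assoc)
        show "\<And>x. nn x \<Longrightarrow> 0 \<le> (a, bb, c, t) \<bullet> L x" using yy(2) by blast
      qed
    qed
    have hU: "0 \<le> a \<bullet> (F *v u) + t * (g \<bullet> u)" if "0 \<le> u" for u
      using cert[of "(u, 0, 0, 0, 0, 0, 0)"] that by (simp add: L_def)
    have hT: "0 \<le> - (a \<bullet> v) + t * (Mv \<bullet> v)" if "0 \<le> v" for v
      using cert[of "(0, v, 0, 0, 0, 0, 0)"] that by (simp add: L_def)
    have hL: "0 \<le> - (bb \<bullet> (transpose F *v w)) + c \<bullet> w + t * (s \<bullet> w)" if "0 \<le> w" for w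
      using cert[of "(0, 0, w, 0, 0, 0, 0)"] that by (simp add: L_def)
    have a0: "0 \<le> a"
      by (rule nonneg_from_inner) (use cert[of "(0, 0, 0, _, 0, 0, 0)"] in \<open>simp add: L_def\<close>)
    have b0: "0 \<le> bb"
      by (rule nonneg_from_inner) (use cert[of "(0, 0, 0, 0, _, 0, 0)"] in \<open>simp add: L_def\<close>)
    have c0: "0 \<le> c"
      by (rule nonneg_from_inner) (use cert[of "(0, 0, 0, 0, 0, _, 0)"] in \<open>simp add: L_def\<close>)
    have t0: "0 \<le> t"
      using cert[of "(0, 0, 0, 0, 0, 0, 1)"] by (simp add: L_def)
    show ?thesis
    proof (cases "t = 0")
      case True
      have "0 \<le> - (a \<bullet> a)" using hT[OF a0] True by simp
      then have "a = 0" by (metis inner_eq_zero_iff inner_ge_zero neg_0_le_iff_le order_antisym)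
      have h1: "0 \<le> - (bb \<bullet> (transpose F *v lam0)) + c \<bullet> lam0" using hL[OF l0(1)] True by simp
      have h2: "bb \<bullet> (- g) \<le> bb \<bullet> (transpose F *v lam0)" using inner_mono_vec[OF b0 l0(3)] .
      have h3: "c \<bullet> lam0 \<le> c \<bullet> Mv" using inner_mono_vec[OF c0 l0(2)] by (simp add: Mv_def)
      have False using Q h1 h2 h3 \<open>a = 0\<close> by (simp add: inner_minus_right)
      then show ?thesis ..
    next
      case False
      have h1: "0 \<le> - (bb \<bullet> (transpose F *v a)) + c \<bullet> a + t * (s \<bullet> a)" using hL[OF a0] .
      have h2: "0 \<le> a \<bullet> (F *v bb) + t * (g \<bullet> bb)" using hU[OF b0] .
      have h3: "0 \<le> - (a \<bullet> c) + t * (Mv \<bullet> c)" using hT[OF c0] .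
      have "0 \<le> t * (a \<bullet> s + bb \<bullet> g + c \<bullet> Mv)"
        using h1 h2 h3 by (simp add: inner_transpose inner_vm inner_commute algebra_simps)
      then have "0 \<le> a \<bullet> s + bb \<bullet> g + c \<bullet> Mv" using False t0
        by (simp add: zero_le_mult_iff)
      then show ?thesis using Q by linarith
    qed
  qed
qed

lemma lp_attain:
  fixes B :: "real^'y^'m" and c :: "real^'y" and r :: "real^'m"
  assumes inf: "(INF y \<in> {y. 0 \<le> y \<and> r \<le> B *v y}. ereal (c \<bullet> y)) \<le> ereal R"
  shows "\<exists>y. 0 \<le> y \<and> r \<le> B *v y \<and> c \<bullet> y \<le> R"
proof -
  define Y where "Y = {y. 0 \<le> y \<and> r \<le> B *v y}"
  have "Y \<noteq> {}" using inf unfolding Y_def[symmetric] by (auto simp: top_ereal_def)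
  then obtain y0 where y0: "0 \<le> y0" "r \<le> B *v y0" unfolding Y_def by auto
  define L :: "(real^'y) \<times> (real^'m) \<times> real \<Rightarrow> (real^'m) \<times> real" where
    "L = (\<lambda>(y, sl, so). (B *v y - sl, c \<bullet> y + so))"
  have lin: "linear L"
    unfolding linear_iff L_def
    by (auto simp: algebra_simps inner_add_right inner_scaleR_right)
  from farkas[OF lin, of "(r, R)"]
  show ?thesis
  proof
    assume "\<exists>x. nn x \<and> L x = (r, R)"
    then obtain y sl so where "0 \<le> y" "0 \<le> sl" "0 \<le> so" "B *v y - sl = r" "c \<bullet> y + so = R"
      by (auto simp: L_def)
    then show ?thesis
      by (intro exI[of _ y]) (auto simp: less_eq_vec_def)
  next
    assume "\<exists>y. y \<bullet> (r, R) < 0 \<and> (\<forall>x. nn x \<longrightarrow> 0 \<le> y \<bullet> L x)"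
    then obtain w where w: "w \<bullet> (r, R) < 0" "\<forall>x. nn x \<longrightarrow> 0 \<le> w \<bullet> L x" by blast
    obtain a t where wat: "w = (a, t)" by (cases w) auto
    note ww = w[unfolded wat]
    have Q: "a \<bullet> r + t * R < 0" using ww(1) by simp
    have hy: "0 \<le> a \<bullet> (B *v y) + t * (c \<bullet> y)" if "0 \<le> y" for y
      using ww(2)[rule_format, of "(y, 0, 0)"] that by (simp add: L_def)
    have na: "0 \<le> - a"
      by (rule nonneg_from_inner) (use ww(2)[rule_format, of "(0, _, 0)"] in \<open>simp add: L_def\<close>)
    have t0: "0 \<le> t" using ww(2)[rule_format, of "(0, 0, 1)"] by (simp add: L_def)
    have mono: "(- a) \<bullet> r \<le> (- a) \<bullet> (B *v y)" if "r \<le> B *v y" for y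
      using inner_mono_vec[OF na that] .
    show ?thesis
    proof (cases "t = 0")
      case True
      then show ?thesis using hy[OF y0(1)] mono[OF y0(2)] Q by simp
    next
      case False
      then have tp: "t > 0" using t0 by simp
      define k where "k = - (a \<bullet> r)"
      have "ereal (k / t) \<le> (INF y \<in> Y. ereal (c \<bullet> y))"
      proof (rule INF_greatest)
        fix y assume "y \<in> Y"
        then have "0 \<le> y" "r \<le> B *v y" unfolding Y_def by auto
        from hy[OF this(1)] mono[OF this(2)] have "k \<le> t * (c \<bullet> y)" by (simp add: k_def)
        then have "k / t \<le> c \<bullet> y" by (simp add: pos_divide_le_eq[OF tp] mult.commute)
        then show "ereal (k / t) \<le> ereal (c \<bullet> y)" by simp
      qed
      also have "\<dots> \<le> ereal R" using inf unfolding Y_def .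
      finally have "k / t \<le> R" by simp
      then have "k \<le> R * t" by (simp add: pos_divide_le_eq[OF tp])
      then show ?thesis using Q by (simp add: k_def mult.commute)
    qed
  qed
qed

lemma OU_ne:
  assumes "0 \<le> lam0" "lam0 \<le> (\<chi> i. M)" "- (transpose Ec *v \<beta>) \<le> transpose (Fc x) *v lam0"
  shows "\<exists>uc ut lam. (uc, ut, lam) \<in> OU Fc Fd h G Ec M x ud \<beta>"
proof -
  obtain uc ut lam where k:
    "Fc x *v uc - ut \<le> h + G *v x - Fd x *v ud"
    "- (transpose Ec *v \<beta>) \<le> transpose (Fc x) *v lam" "lam \<le> (\<chi> i. M)"
    "\<forall>i. lam $ i * (h + G *v x - Fd x *v ud - Fc x *v uc + ut) $ i = 0"
    "\<forall>j. uc $ j * (transpose (Fc x) *v lam + transpose Ec *v \<beta>) $ j = 0"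
    "\<forall>i. ut $ i * (M - lam $ i) = 0" "0 \<le> uc" "0 \<le> ut" "0 \<le> lam"
    using kkt_exists[OF assms, of "h + G *v x - Fd x *v ud"] by blast
  then have "(uc, ut, lam) \<in> OU Fc Fd h G Ec M x ud \<beta>"
    unfolding OU_def by blast
  then show ?thesis by blast
qed

lemma scenario:
  assumes ud: "ud \<in> Ud"
    and l0: "0 \<le> lam0" "lam0 \<le> (\<chi> i. M)" "- (transpose Ec *v \<beta>) \<le> transpose (Fc x) *v lam0"
    and bnd: "\<forall>u\<in>Uset Fc Fd h G Ud x. second_stage B2 c2 d B1 Ec Ed x (fst u) (snd u) \<le> ereal R"
  shows "\<exists>y uc ut lam. ereal (c2 \<bullet> y) - udot ut \<le> ereal R \<and> 0 \<le> y \<and>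
     (\<forall>i. ereal ((d - B1 *v x - Ed *v ud) $ i) \<le> ereal ((B2 *v y + Ec *v uc) $ i) + udot ut) \<and>
     (uc, ut, lam) \<in> OU Fc Fd h G Ec M x ud \<beta>"
proof -
  obtain uc ut lam where ou: "(uc, ut, lam) \<in> OU Fc Fd h G Ec M x ud \<beta>"
    using OU_ne[of lam0 M Ec \<beta> Fc x Fd h G ud, OF l0] by blast
  show ?thesis
  proof (cases "ut = 0")
    case False
    then have "udot ut = \<infinity>" by (simp add: udot_def)
    then show ?thesis using ou by (intro exI[of _ 0] exI[of _ uc] exI[of _ ut] exI[of _ lam]) simp
  next
    case True
    have uc0: "0 \<le> uc" and fe: "Fc x *v uc - ut \<le> h + G *v x - Fd x *v ud"
      using ou unfolding OU_def by auto
    have "Fc x *v uc + Fd x *v ud \<le> h + G *v x"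
      using fe True unfolding less_eq_vec_def by (auto simp: algebra_simps)
    then have "(uc, ud) \<in> Uset Fc Fd h G Ud x" using uc0 ud unfolding Uset_def by auto
    then have "second_stage B2 c2 d B1 Ec Ed x uc ud \<le> ereal R" using bnd by force
    then obtain y where y: "0 \<le> y" "d - B1 *v x - Ec *v uc - Ed *v ud \<le> B2 *v y" "c2 \<bullet> y \<le> R"
      unfolding second_stage_def using lp_attain by blast
    have "\<forall>i. ereal ((d - B1 *v x - Ed *v ud) $ i) \<le> ereal ((B2 *v y + Ec *v uc) $ i) + udot ut"
      using y(2) True unfolding less_eq_vec_def by (auto simp: udot_def algebra_simps)
    then show ?thesis using ou y True
      by (intro exI[of _ y] exI[of _ uc] exI[of _ ut] exI[of _ lam]) (simp add: udot_def)
  qed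
qed


theorem corollary11:
  fixes A :: "real^'x^'a" and b :: "real^'a" and Iint :: "'x set" and c1 :: "real^'x"
    and Fc :: "real^'x \<Rightarrow> real^'uc^'r" and Fd :: "real^'x \<Rightarrow> real^'ud^'r"
    and h :: "real^'r" and G :: "real^'x^'r" and Ud :: "(real^'ud) set"
    and B2 :: "real^'y^'m" and c2 :: "real^'y" and d :: "real^'m" and B1 :: "real^'x^'m"
    and Ec :: "real^'uc^'m" and Ed :: "real^'ud^'m" and M :: real
    and So :: "((real^'ud) \<times> (real^'m)) set" and Sf :: "((real^'ud) \<times> (real^'m)) set"
  assumes Ud_finite: "finite Ud"
    and Ud_int: "Ud \<subseteq> {v. 0 \<le> v \<and> (\<forall>i. v $ i \<in> \<int>)}"
    and U_nonempty: "\<forall>x\<in>Xset A b Iint. Uset Fc Fd h G Ud x \<noteq> {}"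
    and U_bounded: "\<forall>x\<in>Xset A b Iint. bounded (Uset Fc Fd h G Ud x)"
    and bounded_below:
      "(INF (x, u, y) \<in> {(x, u, y). x \<in> Xset A b Iint \<and> u \<in> Uset Fc Fd h G Ud x \<and> 0 \<le> y \<and>
            d - B1 *v x - Ec *v fst u - Ed *v snd u \<le> B2 *v y}.
          ereal (c1 \<bullet> x + c2 \<bullet> y)) > -\<infinity>"
    and M_large: "\<forall>x\<in>Xset A b Iint. \<forall>(ud, \<beta>) \<in> So \<union> Sf.
        \<exists>lam. 0 \<le> lam \<and> lam \<le> (\<chi> i. M) \<and> - (transpose Ec *v \<beta>) \<le> transpose (Fc x) *v lam"
    and So_sub: "So \<subseteq> Ud \<times> {p. p extreme_point_of PiSet B2 c2}"
    and Sf_sub: "Sf \<subseteq> Ud \<times> extreme_rays (PiSet B2 c2)"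
  shows "(\<forall>x\<in>Xset A b Iint. recourse Fc Fd h G Ud B2 c2 d B1 Ec Ed x < \<infinity> \<longrightarrow>
            (\<exists>\<eta> yo uco uto lo yf vc vt z.
               relax_feas A b Iint Fc Fd h G B2 c2 d B1 Ec Ed M So Sf x \<eta> yo uco uto lo yf vc vt z \<and>
               ereal (c1 \<bullet> x + \<eta>) \<le> ereal (c1 \<bullet> x) + recourse Fc Fd h G Ud B2 c2 d B1 Ec Ed x))
         \<and> relax_value A b Iint c1 Fc Fd h G B2 c2 d B1 Ec Ed M So Sf
             \<le> w_star A b Iint c1 Fc Fd h G Ud B2 c2 d B1 Ec Ed"
proof -
  have part1: "\<forall>x\<in>Xset A b Iint. recourse Fc Fd h G Ud B2 c2 d B1 Ec Ed x < \<infinity> \<longrightarrow>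
            (\<exists>\<eta> yo uco uto lo yf vc vt z.
               relax_feas A b Iint Fc Fd h G B2 c2 d B1 Ec Ed M So Sf x \<eta> yo uco uto lo yf vc vt z \<and>
               ereal (c1 \<bullet> x + \<eta>) \<le> ereal (c1 \<bullet> x) + recourse Fc Fd h G Ud B2 c2 d B1 Ec Ed x)"
  proof (intro ballI impI)
    fix x assume xX: "x \<in> Xset A b Iint"
      and fin: "recourse Fc Fd h G Ud B2 c2 d B1 Ec Ed x < \<infinity>"
    define Lb where "Lb = (INF (x, u, y) \<in> {(x, u, y). x \<in> Xset A b Iint \<and> u \<in> Uset Fc Fd h G Ud x \<and> 0 \<le> y \<and>
            d - B1 *v x - Ec *v fst u - Ed *v snd u \<le> B2 *v y}.
          ereal (c1 \<bullet> x + c2 \<bullet> y))"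
    have Lb: "Lb > -\<infinity>" using bounded_below unfolding Lb_def .
    obtain u0 where u0: "u0 \<in> Uset Fc Fd h G Ud x" using U_nonempty xX by blast
    have "Lb - ereal (c1 \<bullet> x) \<le> second_stage B2 c2 d B1 Ec Ed x (fst u0) (snd u0)"
      unfolding second_stage_def
    proof (rule INF_greatest)
      fix y assume "y \<in> {y. 0 \<le> y \<and> d - B1 *v x - Ec *v fst u0 - Ed *v snd u0 \<le> B2 *v y}"
      then have "(x, u0, y) \<in> {(x, u, y). x \<in> Xset A b Iint \<and> u \<in> Uset Fc Fd h G Ud x \<and> 0 \<le> y \<and>
            d - B1 *v x - Ec *v fst u - Ed *v snd u \<le> B2 *v y}" using xX u0 by simp
      then have "Lb \<le> ereal (c1 \<bullet> x + c2 \<bullet> y)" unfolding Lb_def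
        by (rule INF_lower2) simp
      then show "Lb - ereal (c1 \<bullet> x) \<le> ereal (c2 \<bullet> y)"
        by (cases Lb) auto
    qed
    also have "\<dots> \<le> recourse Fc Fd h G Ud B2 c2 d B1 Ec Ed x"
      unfolding recourse_def using u0 by (rule SUP_upper)
    finally have "Lb - ereal (c1 \<bullet> x) \<le> recourse Fc Fd h G Ud B2 c2 d B1 Ec Ed x" .
    then have "recourse Fc Fd h G Ud B2 c2 d B1 Ec Ed x \<noteq> -\<infinity>" using Lb by (cases Lb) auto
    then obtain R where R: "recourse Fc Fd h G Ud B2 c2 d B1 Ec Ed x = ereal R"
      using fin by (cases "recourse Fc Fd h G Ud B2 c2 d B1 Ec Ed x") auto
    have bnd: "\<forall>u\<in>Uset Fc Fd h G Ud x. second_stage B2 c2 d B1 Ec Ed x (fst u) (snd u) \<le> ereal R"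
    proof
      fix u assume "u \<in> Uset Fc Fd h G Ud x"
      then have "second_stage B2 c2 d B1 Ec Ed x (fst u) (snd u) \<le> recourse Fc Fd h G Ud B2 c2 d B1 Ec Ed x"
        unfolding recourse_def by (rule SUP_upper)
      then show "second_stage B2 c2 d B1 Ec Ed x (fst u) (snd u) \<le> ereal R" using R by simp
    qed
    have lam0: "\<exists>lam. 0 \<le> lam \<and> lam \<le> (\<chi> i. M) \<and> - (transpose Ec *v \<beta>) \<le> transpose (Fc x) *v lam"
      if "(ud, \<beta>) \<in> So \<union> Sf" for ud \<beta>
      using M_large xX that by blast
    have "\<forall>q\<in>So. \<exists>w. ereal (c2 \<bullet> fst w) - udot (fst (snd w)) \<le> ereal R \<and> 0 \<le> fst w \<and>
       (\<forall>i. ereal ((d - B1 *v x - Ed *v fst q) $ i) \<le> ereal ((B2 *v fst w + Ec *v fst (snd (snd w))) $ i) + udot (fst (snd w))) \<and>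
       (fst (snd (snd w)), fst (snd w), snd (snd (snd w))) \<in> OU Fc Fd h G Ec M x (fst q) (snd q)"
    proof
      fix q assume q: "q \<in> So"
      obtain ud \<beta> where qq: "q = (ud, \<beta>)" by (cases q) auto
      have ud: "ud \<in> Ud" using So_sub q qq by auto
      obtain l where l: "0 \<le> l" "l \<le> (\<chi> i. M)" "- (transpose Ec *v \<beta>) \<le> transpose (Fc x) *v l"
        using lam0[of ud \<beta>] q qq by auto
      from scenario[OF ud l bnd] obtain y uc ut lam where
        "ereal (c2 \<bullet> y) - udot ut \<le> ereal R \<and> 0 \<le> y \<and>
         (\<forall>i. ereal ((d - B1 *v x - Ed *v ud) $ i) \<le> ereal ((B2 *v y + Ec *v uc) $ i) + udot ut) \<and>
         (uc, ut, lam) \<in> OU Fc Fd h G Ec M x ud \<beta>" by blast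
      then show "\<exists>w. ereal (c2 \<bullet> fst w) - udot (fst (snd w)) \<le> ereal R \<and> 0 \<le> fst w \<and>
       (\<forall>i. ereal ((d - B1 *v x - Ed *v fst q) $ i) \<le> ereal ((B2 *v fst w + Ec *v fst (snd (snd w))) $ i) + udot (fst (snd w))) \<and>
       (fst (snd (snd w)), fst (snd w), snd (snd (snd w))) \<in> OU Fc Fd h G Ec M x (fst q) (snd q)"
        using qq by (intro exI[of _ "(y, ut, uc, lam)"]) simp
    qed
    then obtain fo where fo: "\<forall>q\<in>So. ereal (c2 \<bullet> fst (fo q)) - udot (fst (snd (fo q))) \<le> ereal R \<and> 0 \<le> fst (fo q) \<and>
       (\<forall>i. ereal ((d - B1 *v x - Ed *v fst q) $ i) \<le> ereal ((B2 *v fst (fo q) + Ec *v fst (snd (snd (fo q)))) $ i) + udot (fst (snd (fo q)))) \<and>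
       (fst (snd (snd (fo q))), fst (snd (fo q)), snd (snd (snd (fo q)))) \<in> OU Fc Fd h G Ec M x (fst q) (snd q)"
      by (rule bchoice[elim_format]) blast
    have "\<forall>q\<in>Sf. \<exists>w. 0 \<le> fst w \<and>
       (\<forall>i. ereal ((d - B1 *v x - Ed *v fst q) $ i) \<le> ereal ((B2 *v fst w + Ec *v fst (snd (snd w))) $ i) + udot (fst (snd w))) \<and>
       (fst (snd (snd w)), fst (snd w), snd (snd (snd w))) \<in> OU Fc Fd h G Ec M x (fst q) (snd q)"
    proof
      fix q assume q: "q \<in> Sf"
      obtain ud \<beta> where qq: "q = (ud, \<beta>)" by (cases q) auto
      have ud: "ud \<in> Ud" using Sf_sub q qq by auto
      obtain l where l: "0 \<le> l" "l \<le> (\<chi> i. M)" "- (transpose Ec *v \<beta>) \<le> transpose (Fc x) *v l"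
        using lam0[of ud \<beta>] q qq by auto
      from scenario[OF ud l bnd] obtain y uc ut lam where
        "0 \<le> y \<and>
         (\<forall>i. ereal ((d - B1 *v x - Ed *v ud) $ i) \<le> ereal ((B2 *v y + Ec *v uc) $ i) + udot ut) \<and>
         (uc, ut, lam) \<in> OU Fc Fd h G Ec M x ud \<beta>" by blast
      then show "\<exists>w. 0 \<le> fst w \<and>
       (\<forall>i. ereal ((d - B1 *v x - Ed *v fst q) $ i) \<le> ereal ((B2 *v fst w + Ec *v fst (snd (snd w))) $ i) + udot (fst (snd w))) \<and>
       (fst (snd (snd w)), fst (snd w), snd (snd (snd w))) \<in> OU Fc Fd h G Ec M x (fst q) (snd q)"
        using qq by (intro exI[of _ "(y, ut, uc, lam)"]) simp
    qed
    then obtain ff where ff: "\<forall>q\<in>Sf. 0 \<le> fst (ff q) \<and>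
       (\<forall>i. ereal ((d - B1 *v x - Ed *v fst q) $ i) \<le> ereal ((B2 *v fst (ff q) + Ec *v fst (snd (snd (ff q)))) $ i) + udot (fst (snd (ff q)))) \<and>
       (fst (snd (snd (ff q))), fst (snd (ff q)), snd (snd (snd (ff q)))) \<in> OU Fc Fd h G Ec M x (fst q) (snd q)"
      by (rule bchoice[elim_format]) blast
    have feas: "relax_feas A b Iint Fc Fd h G B2 c2 d B1 Ec Ed M So Sf x R
       (\<lambda>q. fst (fo q)) (\<lambda>q. fst (snd (snd (fo q)))) (\<lambda>q. fst (snd (fo q))) (\<lambda>q. snd (snd (snd (fo q))))
       (\<lambda>q. fst (ff q)) (\<lambda>q. fst (snd (snd (ff q)))) (\<lambda>q. fst (snd (ff q))) (\<lambda>q. snd (snd (snd (ff q))))"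
      unfolding relax_feas_def
      apply (intro conjI)
        apply (rule xX)
      using fo apply auto[1]
      using ff apply auto[1]
      done
    have "ereal (c1 \<bullet> x + R) \<le> ereal (c1 \<bullet> x) + recourse Fc Fd h G Ud B2 c2 d B1 Ec Ed x"
      using R by simp
    with feas show "\<exists>\<eta> yo uco uto lo yf vc vt z.
               relax_feas A b Iint Fc Fd h G B2 c2 d B1 Ec Ed M So Sf x \<eta> yo uco uto lo yf vc vt z \<and>
               ereal (c1 \<bullet> x + \<eta>) \<le> ereal (c1 \<bullet> x) + recourse Fc Fd h G Ud B2 c2 d B1 Ec Ed x"
      by blast
  qed
  have part2: "relax_value A b Iint c1 Fc Fd h G B2 c2 d B1 Ec Ed M So Sf
             \<le> w_star A b Iint c1 Fc Fd h G Ud B2 c2 d B1 Ec Ed"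
    unfolding w_star_def
  proof (rule INF_greatest)
    fix x assume xX: "x \<in> Xset A b Iint"
    show "relax_value A b Iint c1 Fc Fd h G B2 c2 d B1 Ec Ed M So Sf
        \<le> ereal (c1 \<bullet> x) + recourse Fc Fd h G Ud B2 c2 d B1 Ec Ed x"
    proof (cases "recourse Fc Fd h G Ud B2 c2 d B1 Ec Ed x < \<infinity>")
      case False
      then have "recourse Fc Fd h G Ud B2 c2 d B1 Ec Ed x = \<infinity>" by simp
      then show ?thesis by simp
    next
      case True
      with part1 xX obtain \<eta> yo uco uto lo yf vc vt z where
        w: "relax_feas A b Iint Fc Fd h G B2 c2 d B1 Ec Ed M So Sf x \<eta> yo uco uto lo yf vc vt z"
           "ereal (c1 \<bullet> x + \<eta>) \<le> ereal (c1 \<bullet> x) + recourse Fc Fd h G Ud B2 c2 d B1 Ec Ed x"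
        by blast
      have "relax_value A b Iint c1 Fc Fd h G B2 c2 d B1 Ec Ed M So Sf \<le> ereal (c1 \<bullet> x + \<eta>)"
        unfolding relax_value_def using w(1) by (intro Inf_lower) blast
      then show ?thesis using w(2) by (rule order_trans)
    qed
  qed
  from part1 part2 show ?thesis by blast
qed

end
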